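(* Let $0\le T_1\le T$, $T_1>0$, $p\ge 1$, and $\beta>0$. Let $y\in W^{1,1}(0,T)$ and let $\alpha$ be a function with $\alpha(t)\ge 0$ for $t\ge 0$ and $\alpha(t)\ge\beta$ for $t\ge T_1$. Suppose \[ y'(t)+\alpha(t)y(t)\le g(t),\qquad y(0)=y_0, \] where $g\in L^1(0,T_1)\cap L^p(T_1,T)$. Then \[ \sup_{0\le t\le T}y(t)\le |y_0|+(1+\beta^{-1})\big(\|g\|_{L^1(0,T_1)}+\|g\|_{L^p(T_1,T)}\big). \] *)

theory Defs
  imports "HOL-Analysis.Analysis"
begin

text \<open>y belongs to W^{1,1}(a,b) with weak derivative y': y' is Lebesgue integrable on
  [a,b] and y is (the absolutely continuous representative) given by
  y t = y a + integral of y' over [a,t].\<close>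
definition W11 :: "(real \<Rightarrow> real) \<Rightarrow> (real \<Rightarrow> real) \<Rightarrow> real \<Rightarrow> real \<Rightarrow> bool" where
  "W11 y y' a b \<longleftrightarrow> set_integrable lborel {a..b} y' \<and>
     (\<forall>t\<in>{a..b}. y t = y a + (LINT s:{a..t}|lborel. y' s))"

definition in_Lp :: "real \<Rightarrow> (real \<Rightarrow> real) \<Rightarrow> real \<Rightarrow> real \<Rightarrow> bool" where
  "in_Lp p g a b \<longleftrightarrow> set_borel_measurable lborel {a..b} g \<and>
     set_integrable lborel {a..b} (\<lambda>t. \<bar>g t\<bar> powr p)"

definition Lp_norm :: "real \<Rightarrow> (real \<Rightarrow> real) \<Rightarrow> real \<Rightarrow> real \<Rightarrow> real" where
  "Lp_norm p g a b = (LINT t:{a..b}|lborel. \<bar>g t\<bar> powr p) powr (1 / p)"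

end

theory Submission
  imports Defs
begin


lemma young1:
  fixes a L p :: real
  assumes "0 \<le> a" "0 < L" "1 \<le> p"
  shows "a \<le> a powr p / (p * L powr (p-1)) + (1-1/p)*L"
proof (cases "a = 0")
  case True then show ?thesis using assms by (simp add: field_simps)
next
  case False
  hence ap: "a > 0" using assms by simp
  have "((a/L) powr p) powr (1/p) * 1 powr (1-1/p) \<le> (1/p) * (a/L) powr p + (1-1/p)*1"
    by (rule Youngs_inequality_0) (use assms ap in auto)
  moreover have "((a/L) powr p) powr (1/p) = a/L" using assms ap by (simp add: powr_powr)
  ultimately have "a/L \<le> (a/L) powr p / p + (1-1/p)" by simp
  hence "L * (a/L) \<le> L * ((a/L) powr p / p + (1-1/p))" using assms by (intro mult_left_mono) auto
  moreover have "L * ((a/L) powr p / p) = a powr p / (p * L powr (p-1))"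
  proof -
    have "L powr p = L * L powr (p-1)" using assms by (simp add: powr_diff powr_one)
    thus ?thesis using assms ap by (simp add: powr_divide field_simps)
  qed
  ultimately show ?thesis using assms by (simp add: algebra_simps)
qed

lemma crossing:
  fixes y y' h :: "real \<Rightarrow> real" and a b c t :: real
  assumes cont: "continuous_on {a..b} y"
    and diff: "\<And>s t. a \<le> s \<Longrightarrow> s \<le> t \<Longrightarrow> t \<le> b \<Longrightarrow> y t - y s = (LINT r:{s<..t}|lborel. y' r)"
    and iy: "set_integrable lborel {a..b} y'" and ih: "set_integrable lborel {a..b} h"
    and ae: "AE r in lborel. r \<in> {a..b} \<longrightarrow> c < y r \<longrightarrow> y' r \<le> h r"
    and ya: "y a \<le> c" and t: "t \<in> {a..b}"
  shows "\<exists>s\<in>{a..t}. y t \<le> c + (LINT r:{s<..t}|lborel. h r)"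
proof (cases "y t \<le> c")
  case True
  then show ?thesis using t by (intro bexI[of _ t]) (auto simp: set_lebesgue_integral_def)
next
  case False
  define S where "S = {a..t} \<inter> y -` {..c}"
  have cS: "closed S" unfolding S_def
    by (rule continuous_closed_preimage) (use cont t in \<open>auto intro: continuous_on_subset\<close>)
  have neS: "S \<noteq> {}" using ya t unfolding S_def by auto
  have bS: "bdd_above S" unfolding S_def by (rule bdd_aboveI[of _ t]) auto
  define s where "s = Sup S"
  have sS: "s \<in> S" unfolding s_def using closed_contains_Sup[OF neS bS cS] .
  hence s1: "a \<le> s" "s \<le> t" "y s \<le> c" unfolding S_def by auto
  have gt: "c < y r" if "r \<in> {s<..t}" for r
  proof (rule ccontr)
    assume "\<not> c < y r"
    hence "r \<in> S" using that s1 unfolding S_def by auto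
    hence "r \<le> s" unfolding s_def using bS by (rule cSup_upper)
    thus False using that by auto
  qed
  have sub: "{s<..t} \<subseteq> {a..b}" using s1 t by auto
  have "y t - y s = (LINT r:{s<..t}|lborel. y' r)" using diff s1 t by auto
  also have "\<dots> \<le> (LINT r:{s<..t}|lborel. h r)"
  proof (rule set_integral_mono_AE)
    show "set_integrable lborel {s<..t} y'" by (rule set_integrable_subset[OF iy _ sub]) auto
    show "set_integrable lborel {s<..t} h" by (rule set_integrable_subset[OF ih _ sub]) auto
    show "AE x\<in>{s<..t} in lborel. y' x \<le> h x"
      using ae by eventually_elim (use sub gt in auto)
  qed
  finally show ?thesis using s1 by (intro bexI[of _ s]) auto
qed



lemma sic: "set_integrable lborel {a..b::real} (\<lambda>_. c::real)"
  unfolding set_integrable_def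
  using integrable_mult_left[OF integrable_real_indicator[of "{a..b}" lborel], of c]
  by (cases "a \<le> b") (auto simp: mult.commute emeasure_lborel_Icc_eq)

lemma sidiv: "set_integrable M A (f::_\<Rightarrow>real) \<Longrightarrow> set_integrable M A (\<lambda>t. f t / K)"
  using set_integrable_scaleR_right[of "1/K" M A f] by simp

lemma sint_sub_le:
  fixes f :: "real \<Rightarrow> real"
  assumes "set_integrable lborel A f" "B \<in> sets lborel" "B \<subseteq> A" "\<And>x. x \<in> A \<Longrightarrow> 0 \<le> f x"
  shows "(LINT x:B|lborel. f x) \<le> (LINT x:A|lborel. f x)"
proof -
  have "set_integrable lborel B f" by (rule set_integrable_subset[OF assms(1-3)])
  thus ?thesis using assms unfolding set_lebesgue_integral_def set_integrable_def
    by (intro integral_mono) (auto simp: indicator_def)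
qed

lemma sbm_abs:
  fixes g :: "real \<Rightarrow> real"
  assumes "set_borel_measurable lborel A g"
  shows "set_borel_measurable lborel A (\<lambda>x. \<bar>g x\<bar>)"
proof -
  have "(\<lambda>x. indicator A x *\<^sub>R \<bar>g x\<bar>) = (\<lambda>x. \<bar>indicator A x *\<^sub>R g x\<bar>)"
    by (auto simp: indicator_def fun_eq_iff)
  thus ?thesis using assms unfolding set_borel_measurable_def by (simp add: borel_measurable_abs)
qed



theorem lemma3p1:
  fixes T T\<^sub>1 p \<beta> y0 :: real and y y' \<alpha> g :: "real \<Rightarrow> real"
  assumes "0 \<le> T\<^sub>1" "T\<^sub>1 \<le> T" "T\<^sub>1 > 0" "p \<ge> 1" "\<beta> > 0"
    and "W11 y y' 0 T"
    and "\<And>t. t \<ge> 0 \<Longrightarrow> \<alpha> t \<ge> 0"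
    and "\<And>t. t \<ge> T\<^sub>1 \<Longrightarrow> \<alpha> t \<ge> \<beta>"
    and "AE t in lborel. t \<in> {0..T} \<longrightarrow> y' t + \<alpha> t * y t \<le> g t"
    and "y 0 = y0"
    and "in_Lp 1 g 0 T\<^sub>1" and "in_Lp p g T\<^sub>1 T"
  shows "(SUP t\<in>{0..T}. y t) \<le>
           \<bar>y0\<bar> + (1 + 1 / \<beta>) * (Lp_norm 1 g 0 T\<^sub>1 + Lp_norm p g T\<^sub>1 T)"
proof -
  note T1 = assms(1-3) and p = assms(4) and bet = assms(5)
  have iy: "set_integrable lborel {0..T} y'" and yrep: "\<And>t. t \<in> {0..T} \<Longrightarrow> y t = y 0 + (LINT s:{0..t}|lborel. y' s)"
    using assms(6) unfolding W11_def by blast+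
  have diff: "y t - y s = (LINT r:{s<..t}|lborel. y' r)" if "0 \<le> s" "s \<le> t" "t \<le> T" for s t
  proof -
    have e: "{0..t} = {0..s} \<union> {s<..t}" using that by auto
    have "(LINT r:{0..s} \<union> {s<..t}|lborel. y' r) = (LINT r:{0..s}|lborel. y' r) + (LINT r:{s<..t}|lborel. y' r)"
    proof (rule set_integral_Un)
      show "{0..s} \<inter> {s<..t} = {}" by auto
      show "set_integrable lborel {0..s} y'" by (rule set_integrable_subset[OF iy]) (use that in auto)
      show "set_integrable lborel {s<..t} y'" by (rule set_integrable_subset[OF iy]) (use that in auto)
    qed
    hence "(LINT r:{0..t}|lborel. y' r) = (LINT r:{0..s}|lborel. y' r) + (LINT r:{s<..t}|lborel. y' r)"
      by (simp only: e)
    thus ?thesis using yrep[of t] yrep[of s] that by auto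
  qed
  have cont: "continuous_on {0..T} y"
  proof -
    have "continuous_on {0..T} (\<lambda>t. y 0 + integral {0..t} y')"
      using set_borel_integral_eq_integral(1)[OF iy]
      by (intro continuous_intros indefinite_integral_continuous_1)
    moreover have "y t = y 0 + integral {0..t} y'" if "t \<in> {0..T}" for t
      using yrep[OF that] set_borel_integral_eq_integral(2)[OF set_integrable_subset[OF iy, of "{0..t}"]] that
      by auto
    ultimately show ?thesis using continuous_on_cong[OF refl, of "{0..T}" y "\<lambda>t. y 0 + integral {0..t} y'"] by blast
  qed
  define N1 where "N1 = Lp_norm 1 g 0 T\<^sub>1"
  define L where "L = Lp_norm p g T\<^sub>1 T"
  define I where "I = (LINT t:{T\<^sub>1..T}|lborel. \<bar>g t\<bar> powr p)"
  have ig1: "set_integrable lborel {0..T\<^sub>1} (\<lambda>r. \<bar>g r\<bar>)"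
    using assms(11) unfolding in_Lp_def by simp
  have N1nn: "(LINT t:{0..T\<^sub>1}|lborel. \<bar>g t\<bar>) \<ge> 0"
    by (auto simp: set_lebesgue_integral_def intro!: integral_nonneg)
  have N1: "N1 = (LINT t:{0..T\<^sub>1}|lborel. \<bar>g t\<bar>)" "N1 \<ge> 0"
    unfolding N1_def Lp_norm_def using N1nn by auto
  have igp: "set_integrable lborel {T\<^sub>1..T} (\<lambda>r. \<bar>g r\<bar> powr p)" and gm: "set_borel_measurable lborel {T\<^sub>1..T} g"
    using assms(12) unfolding in_Lp_def by auto
  have I0: "I \<ge> 0" unfolding I_def by (auto simp: set_lebesgue_integral_def intro!: integral_nonneg)
  have L: "L = I powr (1/p)" "L \<ge> 0" unfolding L_def I_def Lp_norm_def by auto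
  have ig2: "set_integrable lborel {T\<^sub>1..T} (\<lambda>r. \<bar>g r\<bar>)"
  proof (rule set_integrable_bound[OF _ sbm_abs[OF gm]])
    show "set_integrable lborel {T\<^sub>1..T} (\<lambda>r. \<bar>g r\<bar> powr p + 1)"
      by (intro set_integral_add igp sic)
    have "\<bar>a\<bar> \<le> \<bar>a\<bar> powr p + 1" for a :: real
    proof (cases "\<bar>a\<bar> \<le> 1")
      case False
      hence "\<bar>a\<bar> powr 1 \<le> \<bar>a\<bar> powr p" using p by (intro powr_mono) auto
      thus ?thesis by simp
    qed (use powr_ge_zero[of "\<bar>a\<bar>" p] in linarith)
    thus "AE x in lborel. x \<in> {T\<^sub>1..T} \<longrightarrow> norm \<bar>g x\<bar> \<le> norm (\<bar>g x\<bar> powr p + 1)"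
      by auto
  qed
  have ph1: "y t \<le> \<bar>y0\<bar> + N1" if t: "t \<in> {0..T\<^sub>1}" for t
  proof -
    have "\<exists>s\<in>{0..t}. y t \<le> \<bar>y0\<bar> + (LINT r:{s<..t}|lborel. \<bar>g r\<bar>)"
    proof (rule crossing[where b = T\<^sub>1])
      show "continuous_on {0..T\<^sub>1} y" using T1 by (intro continuous_on_subset[OF cont]) auto
      show "y t - y s = (LINT r:{s<..t}|lborel. y' r)" if "0 \<le> s" "s \<le> t" "t \<le> T\<^sub>1" for s t
        using diff that T1 by auto
      show "set_integrable lborel {0..T\<^sub>1} y'" using T1 by (intro set_integrable_subset[OF iy]) auto
      show "set_integrable lborel {0..T\<^sub>1} (\<lambda>r. \<bar>g r\<bar>)" by (rule ig1)
      show "AE r in lborel. r \<in> {0..T\<^sub>1} \<longrightarrow> \<bar>y0\<bar> < y r \<longrightarrow> y' r \<le> \<bar>g r\<bar>"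
        using assms(9)
      proof eventually_elim
        case (elim r)
        show ?case
        proof (intro impI)
          assume r: "r \<in> {0..T\<^sub>1}" "\<bar>y0\<bar> < y r"
          have "\<alpha> r * y r \<ge> 0" using assms(7)[of r] r by auto
          thus "y' r \<le> \<bar>g r\<bar>" using elim r T1 by auto
        qed
      qed
      show "y 0 \<le> \<bar>y0\<bar>" using assms(10) by simp
    qed (rule t)
    then obtain s where s: "s \<in> {0..t}" "y t \<le> \<bar>y0\<bar> + (LINT r:{s<..t}|lborel. \<bar>g r\<bar>)" by blast
    have "(LINT r:{s<..t}|lborel. \<bar>g r\<bar>) \<le> N1" unfolding N1(1)
      by (rule sint_sub_le[OF ig1]) (use s t in auto)
    thus ?thesis using s by simp
  qed
  have key: "(LINT r:{s<..t}|lborel. \<bar>g r\<bar>) \<le> L * max 1 (t - s)" if st: "T\<^sub>1 \<le> s" "s \<le> t" "t \<le> T" for s t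
  proof (cases "L > 0")
    case True
    define K where "K = p * L powr (p-1)"
    have K: "K > 0" unfolding K_def using True p by auto
    have sub: "{s<..t} \<subseteq> {T\<^sub>1..T}" using st by auto
    have "(LINT r:{s<..t}|lborel. \<bar>g r\<bar>) \<le> (LINT r:{s<..t}|lborel. \<bar>g r\<bar> powr p / K + (1-1/p)*L)"
    proof (rule set_integral_mono)
      show "set_integrable lborel {s<..t} (\<lambda>r. \<bar>g r\<bar>)" by (rule set_integrable_subset[OF ig2 _ sub]) auto
      have "set_integrable lborel {T\<^sub>1..T} (\<lambda>r. \<bar>g r\<bar> powr p / K + (1-1/p)*L)"
        by (intro set_integral_add sidiv igp sic) 
      thus "set_integrable lborel {s<..t} (\<lambda>r. \<bar>g r\<bar> powr p / K + (1-1/p)*L)"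
        by (rule set_integrable_subset[OF _ _ sub]) auto
      show "\<bar>g r\<bar> \<le> \<bar>g r\<bar> powr p / K + (1-1/p)*L" for r
        unfolding K_def using young1[of "\<bar>g r\<bar>" L p] True p by auto
    qed
    also have "\<dots> = (LINT r:{s<..t}|lborel. \<bar>g r\<bar> powr p) / K + (1-1/p)*L*(t-s)"
    proof -
      have a: "set_integrable lborel {s<..t} (\<lambda>r. \<bar>g r\<bar> powr p)" by (rule set_integrable_subset[OF igp _ sub]) auto
      have b: "set_integrable lborel {s<..t} (\<lambda>r. (1-1/p)*L)"
        by (rule set_integrable_subset[OF sic[of T\<^sub>1 T] _ sub]) auto
      have c: "set_integrable lborel {s<..t} (\<lambda>r. \<bar>g r\<bar> powr p / K)"
        using a by (rule sidiv)
      show ?thesis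
        using set_integral_add(2)[OF c b] st
        by (simp add: set_integral_const)
    qed
    also have "\<dots> \<le> I / K + (1-1/p)*L*(t-s)"
    proof -
      have "(LINT r:{s<..t}|lborel. \<bar>g r\<bar> powr p) \<le> I" unfolding I_def
        by (rule sint_sub_le[OF igp]) (use sub in auto)
      thus ?thesis using K by (simp add: divide_right_mono)
    qed
    also have "I / K = L / p"
    proof -
      have "L powr p = I" using L I0 p by (simp add: powr_powr)
      moreover have "L powr p = L * L powr (p-1)" using True by (simp add: powr_diff powr_one)
      ultimately show ?thesis unfolding K_def using True p by (simp add: field_simps)
    qed
    also have "L / p + (1-1/p)*L*(t-s) \<le> L/p * max 1 (t-s) + (1-1/p)*L*max 1 (t-s)"
    proof -
      have "0 \<le> 1 - 1/p" using p by (simp add: field_simps)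
      hence "(1-1/p)*L*(t-s) \<le> (1-1/p)*L*max 1 (t-s)" using L by (intro mult_left_mono) auto
      moreover have "L/p * 1 \<le> L/p * max 1 (t-s)" using L p by (intro mult_left_mono) auto
      ultimately show ?thesis by linarith
    qed
    also have "\<dots> = L * max 1 (t-s)" using p by (simp add: field_simps)
    finally show ?thesis .
  next
    case False
    hence "L = 0" using L by auto
    hence "I = 0" using L by simp
    hence "AE x in lborel. indicator {T\<^sub>1..T} x *\<^sub>R (\<bar>g x\<bar> powr p) = 0"
      using igp integral_nonneg_eq_0_iff_AE[of lborel "\<lambda>x. indicator {T\<^sub>1..T} x *\<^sub>R (\<bar>g x\<bar> powr p)"]
      unfolding I_def set_integrable_def set_lebesgue_integral_def by auto
    hence ae: "AE x\<in>{s<..t} in lborel. \<bar>g x\<bar> \<le> 0"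
      by eventually_elim (use st in \<open>auto simp: indicator_def split: if_splits\<close>)
    have "(LINT r:{s<..t}|lborel. \<bar>g r\<bar>) \<le> (LINT r:{s<..t}|lborel. 0)"
      by (rule set_integral_mono_AE[OF _ _ ae], rule set_integrable_subset[OF ig2]) (use st in \<open>auto simp: set_integrable_def\<close>)
    thus ?thesis using \<open>L = 0\<close> by (simp add: set_lebesgue_integral_def)
  qed
  define c where "c = max (\<bar>y0\<bar> + N1) (L / \<beta>)"
  have c0: "c \<ge> 0" "\<beta> * c \<ge> L" "c \<le> \<bar>y0\<bar> + N1 + L / \<beta>"
    unfolding c_def using N1 L bet by (auto simp: field_simps max_def)
  have ph2: "y t \<le> c + L" if t: "t \<in> {T\<^sub>1..T}" for t
  proof -
    have "\<exists>s\<in>{T\<^sub>1..t}. y t \<le> c + (LINT r:{s<..t}|lborel. \<bar>g r\<bar> - \<beta> * c)"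
    proof (rule crossing[where b = T])
      show "continuous_on {T\<^sub>1..T} y" using T1 by (intro continuous_on_subset[OF cont]) auto
      show "y t - y s = (LINT r:{s<..t}|lborel. y' r)" if "T\<^sub>1 \<le> s" "s \<le> t" "t \<le> T" for s t
        using diff that T1 by auto
      show "set_integrable lborel {T\<^sub>1..T} y'" using T1 by (intro set_integrable_subset[OF iy]) auto
      show "set_integrable lborel {T\<^sub>1..T} (\<lambda>r. \<bar>g r\<bar> - \<beta> * c)" by (intro set_integral_diff ig2 sic)
      show "AE r in lborel. r \<in> {T\<^sub>1..T} \<longrightarrow> c < y r \<longrightarrow> y' r \<le> \<bar>g r\<bar> - \<beta> * c"
        using assms(9)
      proof eventually_elim
        case (elim r)
        show ?case
        proof (intro impI)
          assume r: "r \<in> {T\<^sub>1..T}" "c < y r"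
          have ab: "\<alpha> r \<ge> \<beta>" using assms(8)[of r] r by auto
          have "\<alpha> r * y r \<ge> \<beta> * y r" using ab r c0 by (intro mult_right_mono) auto
          moreover have "\<beta> * y r \<ge> \<beta> * c" using r bet by auto
          ultimately show "y' r \<le> \<bar>g r\<bar> - \<beta> * c" using elim r T1 by auto
        qed
      qed
      show "y T\<^sub>1 \<le> c" using ph1[of T\<^sub>1] T1 unfolding c_def by auto
    qed (rule t)
    then obtain s where s: "s \<in> {T\<^sub>1..t}" "y t \<le> c + (LINT r:{s<..t}|lborel. \<bar>g r\<bar> - \<beta> * c)" by blast
    have "(LINT r:{s<..t}|lborel. \<bar>g r\<bar> - \<beta> * c) = (LINT r:{s<..t}|lborel. \<bar>g r\<bar>) - \<beta> * c * (t - s)"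
    proof -
      have sub: "{s<..t} \<subseteq> {T\<^sub>1..T}" using s t by auto
      have a: "set_integrable lborel {s<..t} (\<lambda>r. \<bar>g r\<bar>)" by (rule set_integrable_subset[OF ig2 _ sub]) auto
      have b: "set_integrable lborel {s<..t} (\<lambda>r. \<beta> * c)"
        by (rule set_integrable_subset[OF sic[of T\<^sub>1 T] _ sub]) auto
      show ?thesis using set_integral_diff(2)[OF a b] s by (simp add: set_integral_const)
    qed
    moreover have "(LINT r:{s<..t}|lborel. \<bar>g r\<bar>) \<le> L * max 1 (t - s)" using key[of s t] s t by auto
    moreover have "L * max 1 (t - s) - \<beta> * c * (t - s) \<le> L"
    proof -
      have "\<beta> * c * (t - s) \<ge> L * (t - s)" using c0 s by (intro mult_right_mono) auto
      moreover have "L * max 1 (t - s) \<le> L + L * (t - s)" using L s by (auto simp: max_def)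
      ultimately show ?thesis by linarith
    qed
    ultimately show ?thesis using s by linarith
  qed
  have bound: "y t \<le> \<bar>y0\<bar> + (1 + 1 / \<beta>) * (N1 + L)" if "t \<in> {0..T}" for t
  proof -
    have "0 \<le> N1 / \<beta>" "0 \<le> L / \<beta>" using N1 L bet by auto
    hence e: "\<bar>y0\<bar> + (1 + 1 / \<beta>) * (N1 + L) = \<bar>y0\<bar> + N1 + L + N1/\<beta> + L/\<beta>"
      using bet by (simp add: field_simps)
    show ?thesis
    proof (cases "t \<le> T\<^sub>1")
      case True
      hence "y t \<le> \<bar>y0\<bar> + N1" using ph1[of t] that by auto
      thus ?thesis unfolding e using N1(2) L(2) \<open>0 \<le> N1 / \<beta>\<close> \<open>0 \<le> L / \<beta>\<close> by linarith
    next
      case False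
      hence "y t \<le> c + L" using ph2[of t] that by auto
      thus ?thesis unfolding e using c0 \<open>0 \<le> N1 / \<beta>\<close> by linarith
    qed
  qed
  show ?thesis unfolding N1_def[symmetric] L_def[symmetric]
    by (rule cSUP_least) (use T1 bound in auto)
qed


end
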